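(* Let $S$ be a $\tau$-uniform sampling of $[n]$ ($\tau\ge1$) with $c_1$-uniform support ($c_1\ge1$), and let $\mathcal G=\mathrm{supp}(S)$. Then $f(x)=\frac1{|\mathcal G|}\sum_{C\in\mathcal G}f_C(x)$ for all $x$, and $$L\le\frac1{|\mathcal G|}\sum_{C\in\mathcal G}L_C\le L^{\mathcal G}_{\max}\le L_{\max}.$$ The last inequality holds without assuming $\tau$-uniformity.
   Context: $f=\frac1n\sum_{i=1}^nf_i$, $f_i:\mathbb{R}^d\to\mathbb{R}$ smooth; for nonempty $C\subseteq[n]$, $f_C=\frac1{|C|}\sum_{i\in C}f_i$ and $L_C$ is the smoothness constant (Lipschitz constant of $\nabla f_C$); $L_i=L_{\{i\}}$, $L=L_{[n]}$, $L_{\max}=\max_iL_i$. A sampling is a random subset $S$ of $[n]$ with $p_C=\Pr(S=C)$, $p_i=\Pr(i\in S)$, $\mathrm{supp}(S)=\{C:p_C>0\}$; $\tau$-uniform means $p_i$ equal for all $i$ and $|S|=\tau$ a.s.; $c_1$-uniform support means $|\{C\in\mathrm{supp}(S):i\in C\}|=c_1$ for all $i$. $L^{\mathcal G}_{\max}=\max_i\frac1{c_1}\sum_{C\in\mathcal G:\,i\in C}L_C$. *)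

theory Defs
  imports "HOL-Analysis.Analysis" "HOL-Probability.Probability"
begin

definition grad :: "('a::euclidean_space \<Rightarrow> real) \<Rightarrow> 'a \<Rightarrow> 'a" where
  "grad g x = (THE v. (g has_derivative (\<lambda>h. v \<bullet> h)) (at x))"

definition smooth_const :: "('a::euclidean_space \<Rightarrow> real) \<Rightarrow> real" where
  "smooth_const g = Inf {K. lipschitz_on K UNIV (grad g)}"

definition fC :: "(nat \<Rightarrow> 'a \<Rightarrow> real) \<Rightarrow> nat set \<Rightarrow> 'a \<Rightarrow> real" where
  "fC f C x = (1 / real (card C)) * (\<Sum>i\<in>C. f i x)"

definition LC :: "(nat \<Rightarrow> 'a::euclidean_space \<Rightarrow> real) \<Rightarrow> nat set \<Rightarrow> real" where
  "LC f C = smooth_const (fC f C)"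

definition Lmax :: "nat \<Rightarrow> (nat \<Rightarrow> 'a::euclidean_space \<Rightarrow> real) \<Rightarrow> real" where
  "Lmax n f = Max ((\<lambda>i. LC f {i}) ` {1..n})"

definition LmaxG :: "nat \<Rightarrow> (nat \<Rightarrow> 'a::euclidean_space \<Rightarrow> real) \<Rightarrow> nat set set \<Rightarrow> nat \<Rightarrow> real" where
  "LmaxG n f G c1 = Max ((\<lambda>i. (1 / real c1) * (\<Sum>C\<in>{C\<in>G. i \<in> C}. LC f C)) ` {1..n})"

definition is_sampling :: "nat \<Rightarrow> nat set pmf \<Rightarrow> bool" where
  "is_sampling n S \<longleftrightarrow> set_pmf S \<subseteq> Pow {1..n}"

definition tau_uniform :: "nat \<Rightarrow> nat \<Rightarrow> nat set pmf \<Rightarrow> bool" where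
  "tau_uniform n \<tau> S \<longleftrightarrow>
     (\<forall>C\<in>set_pmf S. card C = \<tau>) \<and>
     (\<forall>i\<in>{1..n}. \<forall>j\<in>{1..n}.
        measure_pmf.prob S {C. i \<in> C} = measure_pmf.prob S {C. j \<in> C})"

definition uniform_support :: "nat \<Rightarrow> nat \<Rightarrow> nat set pmf \<Rightarrow> bool" where
  "uniform_support n c1 S \<longleftrightarrow> (\<forall>i\<in>{1..n}. card {C\<in>set_pmf S. i \<in> C} = c1)"

end

theory Submission
  imports Defs
begin

lemma lin_repr:
  fixes D :: "'a::euclidean_space \<Rightarrow> real"
  assumes "linear D"
  shows "D h = (\<Sum>b\<in>Basis. D b *\<^sub>R b) \<bullet> h"
proof -
  have "D h = D (\<Sum>b\<in>Basis. (h \<bullet> b) *\<^sub>R b)" by (simp add: euclidean_representation)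
  also have "\<dots> = (\<Sum>b\<in>Basis. (h \<bullet> b) * D b)"
    using assms by (simp add: linear_sum linear_scale)
  also have "\<dots> = (\<Sum>b\<in>Basis. D b *\<^sub>R b) \<bullet> h"
    by (simp add: inner_sum_left mult.commute inner_commute[of h])
  finally show ?thesis .
qed

lemma grad_unique:
  fixes g :: "'a::euclidean_space \<Rightarrow> real"
  assumes "(g has_derivative (\<lambda>h. v \<bullet> h)) (at x)"
  shows "grad g x = v"
proof -
  have u: "w = v" if "(g has_derivative (\<lambda>h. w \<bullet> h)) (at x)" for w
  proof -
    have "(\<lambda>h. w \<bullet> h) = (\<lambda>h. v \<bullet> h)"
      using has_derivative_unique[OF that assms] .
    then have "w \<bullet> (w - v) = v \<bullet> (w - v)" by metis
    then have "(w - v) \<bullet> (w - v) = 0" by (simp add: inner_diff_left)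
    then show ?thesis by simp
  qed
  show ?thesis unfolding grad_def
    using assms u by (rule the_equality)
qed

lemma grad_has_derivative:
  fixes g :: "'a::euclidean_space \<Rightarrow> real"
  assumes "g differentiable (at x)"
  shows "(g has_derivative (\<lambda>h. grad g x \<bullet> h)) (at x)"
proof -
  obtain D where D: "(g has_derivative D) (at x)" using assms differentiable_def by blast
  have "linear D" using D has_derivative_linear by blast
  then have "D = (\<lambda>h. (\<Sum>b\<in>Basis. D b *\<^sub>R b) \<bullet> h)" using lin_repr by blast
  with D have "(g has_derivative (\<lambda>h. (\<Sum>b\<in>Basis. D b *\<^sub>R b) \<bullet> h)) (at x)" by simp
  then show ?thesis using grad_unique by metis
qed

definition sm :: "('a::euclidean_space \<Rightarrow> real) \<Rightarrow> real \<Rightarrow> bool" where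
  "sm g K \<longleftrightarrow> (\<forall>x. g differentiable (at x)) \<and> lipschitz_on K UNIV (grad g)"

lemma sm_sum:
  fixes g :: "'b \<Rightarrow> 'a::euclidean_space \<Rightarrow> real"
  assumes fin: "finite I" and a: "\<forall>i\<in>I. a i \<ge> 0" and s: "\<forall>i\<in>I. sm (g i) (K i)"
  shows "sm (\<lambda>x. \<Sum>i\<in>I. a i * g i x) (\<Sum>i\<in>I. a i * K i)"
proof -
  have d: "((\<lambda>x. \<Sum>i\<in>I. a i * g i x) has_derivative (\<lambda>h. (\<Sum>i\<in>I. a i *\<^sub>R grad (g i) x) \<bullet> h)) (at x)" for x
  proof -
    have "((\<lambda>x. \<Sum>i\<in>I. a i * g i x) has_derivative (\<lambda>h. \<Sum>i\<in>I. a i * (grad (g i) x \<bullet> h))) (at x)"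
      apply (rule has_derivative_sum)
      apply (rule has_derivative_mult_right)
      using s grad_has_derivative unfolding sm_def by blast
    then show ?thesis by (simp add: inner_sum_left)
  qed
  then have gr: "grad (\<lambda>x. \<Sum>i\<in>I. a i * g i x) x = (\<Sum>i\<in>I. a i *\<^sub>R grad (g i) x)" for x
    using grad_unique by blast
  have diff: "\<forall>x. (\<lambda>x. \<Sum>i\<in>I. a i * g i x) differentiable (at x)"
    using d differentiable_def by blast
  have lip: "lipschitz_on (\<Sum>i\<in>I. a i * K i) UNIV (grad (\<lambda>x. \<Sum>i\<in>I. a i * g i x))"
    unfolding lipschitz_on_def
  proof (intro conjI ballI)
    show "0 \<le> (\<Sum>i\<in>I. a i * K i)"
      using a s unfolding sm_def lipschitz_on_def by (intro sum_nonneg) auto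
  next
    fix x y :: 'a
    have "dist (\<Sum>i\<in>I. a i *\<^sub>R grad (g i) x) (\<Sum>i\<in>I. a i *\<^sub>R grad (g i) y)
        = norm (\<Sum>i\<in>I. a i *\<^sub>R (grad (g i) x - grad (g i) y))"
      by (simp add: dist_norm sum_subtractf scaleR_diff_right)
    also have "\<dots> \<le> (\<Sum>i\<in>I. norm (a i *\<^sub>R (grad (g i) x - grad (g i) y)))"
      by (rule norm_sum)
    also have "\<dots> \<le> (\<Sum>i\<in>I. a i * K i * dist x y)"
    proof (rule sum_mono)
      fix i assume i: "i \<in> I"
      have "dist (grad (g i) x) (grad (g i) y) \<le> K i * dist x y"
        using s i unfolding sm_def lipschitz_on_def by auto
      then have "a i * norm (grad (g i) x - grad (g i) y) \<le> a i * (K i * dist x y)"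
        using a i by (simp add: dist_norm mult_left_mono)
      then show "norm (a i *\<^sub>R (grad (g i) x - grad (g i) y)) \<le> a i * K i * dist x y"
        using a i by (simp add: mult.assoc)
    qed
    also have "\<dots> = (\<Sum>i\<in>I. a i * K i) * dist x y" by (simp add: sum_distrib_right)
    finally show "dist (grad (\<lambda>x. \<Sum>i\<in>I. a i * g i x) x) (grad (\<lambda>x. \<Sum>i\<in>I. a i * g i x) y)
        \<le> (\<Sum>i\<in>I. a i * K i) * dist x y" by (simp add: gr)
  qed
  show ?thesis using diff lip sm_def by blast
qed

lemma sc_le: "lipschitz_on K UNIV (grad g) \<Longrightarrow> smooth_const g \<le> K"
  unfolding smooth_const_def
  by (rule cInf_lower) (auto intro: bdd_belowI[where m=0] simp: lipschitz_on_def)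

lemma sc_sm: assumes "sm g K" shows "sm g (smooth_const g)"
proof -
  let ?A = "{K. lipschitz_on K UNIV (grad g)}"
  have ne: "?A \<noteq> {}" using assms sm_def by blast
  have "0 \<le> smooth_const g" unfolding smooth_const_def
    using ne by (intro cInf_greatest) (auto simp: lipschitz_on_def)
  moreover have "dist (grad g x) (grad g y) \<le> smooth_const g * dist x y" for x y
  proof (cases "x = y")
    case True then show ?thesis by simp
  next
    case False
    then have dp: "dist x y > 0" by simp
    have "dist (grad g x) (grad g y) / dist x y \<le> smooth_const g" unfolding smooth_const_def
      using ne dp by (intro cInf_greatest) (auto simp: lipschitz_on_def pos_divide_le_eq)
    then show ?thesis using dp by (simp add: pos_divide_le_eq)
  qed
  ultimately show ?thesis using assms unfolding sm_def lipschitz_on_def by auto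
qed


lemma fC_single: "fC f {j} = f j"
  by (rule ext) (simp add: fC_def)

lemma fC_sum: "fC f C = (\<lambda>x. \<Sum>j\<in>C. (1 / real (card C)) * f j x)"
  by (rule ext) (simp add: fC_def sum_distrib_left)

lemma fC_sm:
  assumes smooth: "\<forall>i\<in>{1..n}. (\<forall>x. f i differentiable (at x)) \<and>
                      (\<exists>K. lipschitz_on K UNIV (grad (f i)))"
    and C: "C \<subseteq> {1..n}"
  shows "sm (fC f C) (\<Sum>j\<in>C. (1 / real (card C)) * LC f {j})"
proof -
  have fin: "finite C" using C finite_subset by blast
  have "sm (f j) (LC f {j})" if "j \<in> C" for j
  proof -
    have "sm (f j) (SOME K. lipschitz_on K UNIV (grad (f j)))"
      using smooth that C unfolding sm_def by (metis (no_types, lifting) someI_ex subsetD)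
    then show ?thesis using sc_sm by (simp add: LC_def fC_single)
  qed
  then show ?thesis unfolding fC_sum
    by (intro sm_sum fin) auto
qed

lemma LC_le:
  assumes smooth: "\<forall>i\<in>{1..n}. (\<forall>x. f i differentiable (at x)) \<and>
                      (\<exists>K. lipschitz_on K UNIV (grad (f i)))"
    and C: "C \<subseteq> {1..n}"
  shows "LC f C \<le> (\<Sum>j\<in>C. (1 / real (card C)) * LC f {j})"
    and "sm (fC f C) (LC f C)"
  using fC_sm[OF smooth C] sc_le sc_sm unfolding sm_def LC_def by blast+

lemma Lmax_bound:
  fixes f :: "nat \<Rightarrow> 'a::euclidean_space \<Rightarrow> real"
  assumes smooth: "\<forall>i\<in>{1..n}. (\<forall>x. f i differentiable (at x)) \<and>
                      (\<exists>K. lipschitz_on K UNIV (grad (f i)))"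
    and n: "n \<ge> 1" and samp: "is_sampling n S'" and c1: "c1' \<ge> 1" and cu: "uniform_support n c1' S'"
  shows "LmaxG n f (set_pmf S') c1' \<le> Lmax n f"
proof -
  let ?G = "set_pmf S'"
  have finG: "finite ?G" using samp unfolding is_sampling_def
    by (meson finite_Pow_iff finite_atLeastAtMost finite_subset)
  have ne: "(\<lambda>i. LC f {i}) ` {1..n} \<noteq> {}" using n by auto
  have Lj: "LC f {j} \<le> Lmax n f" if "j \<in> {1..n}" for j
    unfolding Lmax_def using that by (intro Max_ge) auto
  have LCb: "LC f C \<le> Lmax n f" if "C \<in> ?G" "C \<noteq> {}" for C
  proof -
    have Cs: "C \<subseteq> {1..n}" using samp that unfolding is_sampling_def by auto
    have fin: "finite C" using Cs finite_subset by blast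
    have "LC f C \<le> (\<Sum>j\<in>C. (1 / real (card C)) * LC f {j})" by (rule LC_le(1)[OF smooth Cs])
    also have "\<dots> \<le> (\<Sum>j\<in>C. (1 / real (card C)) * Lmax n f)"
      using Lj Cs by (intro sum_mono mult_left_mono) auto
    also have "\<dots> = Lmax n f" using fin that(2) by simp
    finally show ?thesis .
  qed
  show ?thesis unfolding LmaxG_def
  proof (rule Max.boundedI)
    show "finite ((\<lambda>i. 1 / real c1' * (\<Sum>C\<in>{C \<in> ?G. i \<in> C}. LC f C)) ` {1..n})" by simp
    show "(\<lambda>i. 1 / real c1' * (\<Sum>C\<in>{C \<in> ?G. i \<in> C}. LC f C)) ` {1..n} \<noteq> {}" using n by auto
  next
    fix a assume "a \<in> (\<lambda>i. 1 / real c1' * (\<Sum>C\<in>{C \<in> ?G. i \<in> C}. LC f C)) ` {1..n}"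
    then obtain i where i: "i \<in> {1..n}" and a: "a = 1 / real c1' * (\<Sum>C\<in>{C \<in> ?G. i \<in> C}. LC f C)" by blast
    have "(\<Sum>C\<in>{C \<in> ?G. i \<in> C}. LC f C) \<le> (\<Sum>C\<in>{C \<in> ?G. i \<in> C}. Lmax n f)"
      using LCb by (intro sum_mono) auto
    also have "\<dots> = real c1' * Lmax n f" using cu i unfolding uniform_support_def by simp
    finally have "(\<Sum>C\<in>{C \<in> ?G. i \<in> C}. LC f C) \<le> real c1' * Lmax n f" .
    moreover have "real c1' > 0" using c1 by simp
    ultimately show "a \<le> Lmax n f" unfolding a by (simp add: divide_le_eq mult.commute)
  qed
qed


lemma dcount:
  assumes G: "finite G" "\<forall>C\<in>G. C \<subseteq> {1..n::nat}"
  shows "(\<Sum>C\<in>G. \<Sum>i\<in>C. h i C) = (\<Sum>i\<in>{1..n}. \<Sum>C\<in>{C\<in>G. i \<in> C}. (h i C :: real))"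
proof -
  have "(\<Sum>C\<in>G. \<Sum>i\<in>C. h i C) = (\<Sum>C\<in>G. \<Sum>i\<in>{i\<in>{1..n}. i \<in> C}. h i C)"
    using G(2) by (intro sum.cong refl) force
  also have "\<dots> = (\<Sum>i\<in>{1..n}. \<Sum>C\<in>{C\<in>G. i \<in> C}. h i C)"
    by (rule sum.swap_restrict) (use G in auto)
  finally show ?thesis .
qed

theorem theorem4p17:
  fixes f :: "nat \<Rightarrow> 'a::euclidean_space \<Rightarrow> real"
    and n \<tau> c1 :: nat and S :: "nat set pmf"
  assumes smooth: "\<forall>i\<in>{1..n}. (\<forall>x. f i differentiable (at x)) \<and>
                      (\<exists>K. lipschitz_on K UNIV (grad (f i)))"
    and samp: "is_sampling n S"
    and tau: "\<tau> \<ge> 1" and tauu: "tau_uniform n \<tau> S"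
    and c1: "c1 \<ge> 1" and c1u: "uniform_support n c1 S"
  shows "(\<forall>x. fC f {1..n} x = (1 / real (card (set_pmf S))) * (\<Sum>C\<in>set_pmf S. fC f C x))
       \<and> LC f {1..n} \<le> (1 / real (card (set_pmf S))) * (\<Sum>C\<in>set_pmf S. LC f C)
       \<and> (1 / real (card (set_pmf S))) * (\<Sum>C\<in>set_pmf S. LC f C) \<le> LmaxG n f (set_pmf S) c1
       \<and> LmaxG n f (set_pmf S) c1 \<le> Lmax n f
       \<and> (\<forall>S' c1'. is_sampling n S' \<and> c1' \<ge> 1 \<and> uniform_support n c1' S'
              \<longrightarrow> LmaxG n f (set_pmf S') c1' \<le> Lmax n f)"
proof -
  let ?G = "set_pmf S"
  have finG: "finite ?G" using samp unfolding is_sampling_def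
    by (meson finite_Pow_iff finite_atLeastAtMost finite_subset)
  have Gsub: "\<forall>C\<in>?G. C \<subseteq> {1..n}" using samp unfolding is_sampling_def by auto
  have card: "\<forall>C\<in>?G. card C = \<tau>" using tauu unfolding tau_uniform_def by auto
  have cu: "\<forall>i\<in>{1..n}. card {C\<in>?G. i \<in> C} = c1" using c1u unfolding uniform_support_def by auto
  have Gne: "?G \<noteq> {}" by (rule set_pmf_not_empty)
  then obtain C0 where C0: "C0 \<in> ?G" by blast
  have n: "n \<ge> 1"
  proof -
    have "\<tau> = card C0" using card C0 by simp
    also have "\<dots> \<le> card {1..n}" using Gsub C0 by (intro card_mono) auto
    finally show ?thesis using tau by simp
  qed
  have cardG: "real (card ?G) > 0" using finG Gne by (simp add: card_gt_0_iff)
  have key: "real (card ?G) * real \<tau> = real n * real c1"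
  proof -
    have "(\<Sum>C\<in>?G. \<Sum>i\<in>C. (1::real)) = (\<Sum>i\<in>{1..n}. \<Sum>C\<in>{C\<in>?G. i \<in> C}. 1)"
      by (rule dcount[OF finG Gsub])
    moreover have "(\<Sum>C\<in>?G. \<Sum>i\<in>C. (1::real)) = real (card ?G) * real \<tau>" using card by simp
    moreover have "(\<Sum>i\<in>{1..n}. \<Sum>C\<in>{C\<in>?G. i \<in> C}. (1::real)) = real n * real c1" using cu by simp
    ultimately show ?thesis by simp
  qed
  have taup: "real \<tau> > 0" using tau by simp
  have fCG: "fC f C x = (1 / real \<tau>) * (\<Sum>i\<in>C. f i x)" if "C \<in> ?G" for C x
    using card that by (simp add: fC_def)
  have P1: "fC f {1..n} x = (1 / real (card ?G)) * (\<Sum>C\<in>?G. fC f C x)" for x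
  proof -
    have "(\<Sum>C\<in>?G. fC f C x) = (\<Sum>C\<in>?G. \<Sum>i\<in>C. (1 / real \<tau>) * f i x)"
      using fCG by (simp add: sum_distrib_left)
    also have "\<dots> = (\<Sum>i\<in>{1..n}. \<Sum>C\<in>{C\<in>?G. i \<in> C}. (1 / real \<tau>) * f i x)"
      by (rule dcount[OF finG Gsub])
    also have "\<dots> = (\<Sum>i\<in>{1..n}. real c1 * ((1 / real \<tau>) * f i x))" using cu by simp
    also have "\<dots> = real c1 / real \<tau> * (\<Sum>i\<in>{1..n}. f i x)" by (simp add: sum_distrib_left)
    finally have e: "(\<Sum>C\<in>?G. fC f C x) = real c1 / real \<tau> * (\<Sum>i\<in>{1..n}. f i x)" .
    have "real c1 / real \<tau> / real (card ?G) = 1 / real n"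
      using key cardG taup n c1 by (simp add: field_simps)
    moreover have "fC f {1..n} x = 1 / real n * (\<Sum>i\<in>{1..n}. f i x)" by (simp add: fC_def)
    ultimately show ?thesis unfolding e by (metis (no_types, lifting) mult.assoc mult.commute times_divide_eq_left mult_1)
  qed
  have P2: "LC f {1..n} \<le> (1 / real (card ?G)) * (\<Sum>C\<in>?G. LC f C)"
  proof -
    have eq: "fC f {1..n} = (\<lambda>x. \<Sum>C\<in>?G. (1 / real (card ?G)) * fC f C x)"
      using P1 by (auto simp: sum_distrib_left)
    have "sm (fC f {1..n}) (\<Sum>C\<in>?G. (1 / real (card ?G)) * LC f C)"
      unfolding eq using LC_le(2)[OF smooth] Gsub finG by (intro sm_sum) auto
    then have "LC f {1..n} \<le> (\<Sum>C\<in>?G. (1 / real (card ?G)) * LC f C)"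
      unfolding LC_def sm_def using sc_le by blast
    then show ?thesis by (simp add: sum_distrib_left)
  qed
  have P3: "(1 / real (card ?G)) * (\<Sum>C\<in>?G. LC f C) \<le> LmaxG n f ?G c1"
  proof -
    let ?M = "LmaxG n f ?G c1"
    have Mi: "(1 / real c1) * (\<Sum>C\<in>{C\<in>?G. i \<in> C}. LC f C) \<le> ?M" if "i \<in> {1..n}" for i
      unfolding LmaxG_def using that by (intro Max_ge) auto
    have c1p: "real c1 > 0" using c1 by simp
    have "(\<Sum>C\<in>?G. LC f C) = (\<Sum>C\<in>?G. \<Sum>i\<in>C. (1 / real \<tau>) * LC f C)"
      using card taup by (intro sum.cong refl) simp
    also have "\<dots> = (\<Sum>i\<in>{1..n}. \<Sum>C\<in>{C\<in>?G. i \<in> C}. (1 / real \<tau>) * LC f C)"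
      by (rule dcount[OF finG Gsub])
    also have "\<dots> = (\<Sum>i\<in>{1..n}. (real c1 / real \<tau>) * ((1 / real c1) * (\<Sum>C\<in>{C\<in>?G. i \<in> C}. LC f C)))"
      using c1p by (intro sum.cong refl) (simp add: sum_distrib_left)
    also have "\<dots> \<le> (\<Sum>i\<in>{1..n}. (real c1 / real \<tau>) * ?M)"
      using Mi c1p taup by (intro sum_mono mult_left_mono) auto
    also have "\<dots> = real (card ?G) * ?M"
      using key taup by (simp add: field_simps)
    finally have "(\<Sum>C\<in>?G. LC f C) \<le> real (card ?G) * ?M" .
    then show ?thesis using cardG by (simp add: divide_le_eq mult.commute)
  qed
  have P5: "\<forall>S' c1'. is_sampling n S' \<and> c1' \<ge> 1 \<and> uniform_support n c1' S'
              \<longrightarrow> LmaxG n f (set_pmf S') c1' \<le> Lmax n f"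
    using Lmax_bound[OF smooth n] by blast
  show ?thesis using P1 P2 P3 P5 samp c1 c1u by blast
qed

end
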